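(* Let $n_1,\dots,n_r,k$ be integers with $\min\{n_1,\dots,n_r\}>2k>0$, and let $g\in S_{n_1}\times\dots\times S_{n_r}$ be such that for every $1\le i\le r$, all cycles of the projection of $g$ to $S_{n_i}$ have length exceeding $k$. Then the subgroups $S_{n_1-k}\times\dots\times S_{n_r-k}$ and $\langle g\rangle$ invariably generate $S_{n_1}\times\dots\times S_{n_r}$.
   Context: $S_{n_1}\times\dots\times S_{n_r}$ is the group of permutations of $\{1,\dots,n_1+\dots+n_r\}$ preserving each block $B_i=\{n_1+\dots+n_{i-1}+1,\dots,n_1+\dots+n_i\}$, with $S_{n_i}$ the permutations of $B_i$; $S_{n_i-k}\le S_{n_i}$ is the subgroup of permutations of the first $n_i-k$ elements of $B_i$ fixing its last $k$ elements. Subgroups $\{H_i\}_{i\in I}$ of a group $H$ invariably generate $H$ if for every choice of $\{\sigma_i\}_{i\in I}\subseteq H$ the conjugates $\{\sigma_i^{-1}H_i\sigma_i\}$ generate $H$. *)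

theory Defs
  imports "HOL-Algebra.Sym_Groups" "HOL-Algebra.Generated_Groups" "HOL-Combinatorics.Orbits"
begin

text \<open>Blocks are 0-indexed by i < length ns; the ground set is {1..N}, N = sum_list ns.\<close>

definition blk_offset :: "nat list \<Rightarrow> nat \<Rightarrow> nat" where
  "blk_offset ns i = sum_list (take i ns)"

definition blk :: "nat list \<Rightarrow> nat \<Rightarrow> nat set" where
  "blk ns i = {blk_offset ns i + 1 .. blk_offset ns i + ns ! i}"

definition young_carrier :: "nat list \<Rightarrow> (nat \<Rightarrow> nat) set" where
  "young_carrier ns = {p. p permutes {1..sum_list ns} \<and> (\<forall>i < length ns. p ` blk ns i = blk ns i)}"

definition young_group :: "nat list \<Rightarrow> (nat \<Rightarrow> nat) monoid" where
  "young_group ns = (sym_group (sum_list ns)) \<lparr>carrier := young_carrier ns\<rparr>"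

text \<open>The subgroup S_{n_1-k} x ... x S_{n_r-k}: elements fixing the last k points of every block.\<close>
definition young_sub :: "nat list \<Rightarrow> nat \<Rightarrow> (nat \<Rightarrow> nat) set" where
  "young_sub ns k = {p \<in> young_carrier ns.
     \<forall>i < length ns. \<forall>x \<in> {blk_offset ns i + ns ! i - k + 1 .. blk_offset ns i + ns ! i}. p x = x}"

definition invariably_generate :: "('a, 'b) monoid_scheme \<Rightarrow> 'i set \<Rightarrow> ('i \<Rightarrow> 'a set) \<Rightarrow> bool" where
  "invariably_generate G I H \<longleftrightarrow>
     (\<forall>\<sigma>. (\<forall>i \<in> I. \<sigma> i \<in> carrier G) \<longrightarrow>
        generate G (\<Union>i \<in> I. (\<lambda>h. inv\<^bsub>G\<^esub> (\<sigma> i) \<otimes>\<^bsub>G\<^esub> h \<otimes>\<^bsub>G\<^esub> \<sigma> i) ` H i) = carrier G)"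

end

theory Submission
  imports Defs
begin


lemma yg_simps[simp]: "carrier (young_group ns) = young_carrier ns"
  "mult (young_group ns) = (\<circ>)" "one (young_group ns) = id"
  by (simp_all add: young_group_def sym_group_def)

lemma young_subgroup: "subgroup (young_carrier ns) (sym_group (sum_list ns))"
proof
  show "young_carrier ns \<subseteq> carrier (sym_group (sum_list ns))"
    by (auto simp: young_carrier_def sym_group_def)
next
  fix x y assume "x \<in> young_carrier ns" "y \<in> young_carrier ns"
  then show "x \<otimes>\<^bsub>sym_group (sum_list ns)\<^esub> y \<in> young_carrier ns"
  proof -
    have "(x \<circ> y) ` blk ns i = blk ns i" if "i < length ns" for i
      using \<open>x \<in> young_carrier ns\<close> \<open>y \<in> young_carrier ns\<close> that
      unfolding young_carrier_def image_comp[symmetric] by simp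
    then show ?thesis using \<open>x \<in> young_carrier ns\<close> \<open>y \<in> young_carrier ns\<close>
      unfolding young_carrier_def sym_group_def by (simp add: permutes_compose)
  qed
next
  show "\<one>\<^bsub>sym_group (sum_list ns)\<^esub> \<in> young_carrier ns"
    by (auto simp: young_carrier_def sym_group_def permutes_id)
next
  fix x assume x: "x \<in> young_carrier ns"
  then have xc: "x \<in> carrier (sym_group (sum_list ns))" and xp: "x permutes {1..sum_list ns}"
    by (auto simp: young_carrier_def sym_group_def)
  have "inv' x ` blk ns i = blk ns i" if "i < length ns" for i
  proof -
    have "x ` blk ns i = blk ns i" using x that by (auto simp: young_carrier_def)
    then have "inv' x ` blk ns i = inv' x ` x ` blk ns i" by simp
    also have "\<dots> = blk ns i" using permutes_inverses(2)[OF xp] by (simp add: image_comp)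
    finally show ?thesis .
  qed
  then show "inv\<^bsub>sym_group (sum_list ns)\<^esub> x \<in> young_carrier ns"
    using xc xp by (auto simp: young_carrier_def permutes_inv)
qed

lemma young_group_is_group: "group (young_group ns)"
  unfolding young_group_def
  by (rule subgroup.subgroup_is_group[OF young_subgroup sym_group_is_group])

lemma yinv:
  assumes "p \<in> young_carrier ns"
  shows "inv\<^bsub>young_group ns\<^esub> p \<in> young_carrier ns"
    "inv\<^bsub>young_group ns\<^esub> p \<circ> p = id" "p \<circ> inv\<^bsub>young_group ns\<^esub> p = id"
  using group.inv_closed[OF young_group_is_group, of p ns]
    group.l_inv[OF young_group_is_group, of p ns] group.r_inv[OF young_group_is_group, of p ns] assms
  by auto

lemma yc_permutes: "p \<in> young_carrier ns \<Longrightarrow> p permutes {1..sum_list ns}"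
  by (simp add: young_carrier_def)

lemma yc_inj: "p \<in> young_carrier ns \<Longrightarrow> inj p"
  using yc_permutes permutes_inj by blast

lemma yc_blk: "p \<in> young_carrier ns \<Longrightarrow> i < length ns \<Longrightarrow> x \<in> blk ns i \<Longrightarrow> p x \<in> blk ns i"
  by (auto simp: young_carrier_def)

lemma off_Suc: "i < length ns \<Longrightarrow> blk_offset ns (Suc i) = blk_offset ns i + ns ! i"
  by (simp add: blk_offset_def take_Suc_conv_app_nth)

lemma off_mono: "i \<le> j \<Longrightarrow> blk_offset ns i \<le> blk_offset ns j"
proof -
  assume "i \<le> j"
  then obtain d where "j = i + d" using le_Suc_ex by blast
  then show ?thesis by (simp add: blk_offset_def take_add)
qed

lemma off_len: "blk_offset ns (length ns) = sum_list ns"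
  by (simp add: blk_offset_def)

lemma blk_disj: "i < length ns \<Longrightarrow> j < length ns \<Longrightarrow> i \<noteq> j \<Longrightarrow> blk ns i \<inter> blk ns j = {}"
proof -
  have *: "blk ns i \<inter> blk ns j = {}" if "i < j" "j < length ns" for i j
  proof -
    have "blk_offset ns (Suc i) \<le> blk_offset ns j" using off_mono that by simp
    then show ?thesis using off_Suc[of i ns] that by (auto simp: blk_def)
  qed
  assume "i < length ns" "j < length ns" "i \<noteq> j"
  then show ?thesis using *[of i j] *[of j i] by (cases "i < j") auto
qed

lemma blk_sub: "i < length ns \<Longrightarrow> blk ns i \<subseteq> {1..sum_list ns}"
proof -
  assume i: "i < length ns"
  have "blk_offset ns (Suc i) \<le> blk_offset ns (length ns)" using off_mono i by simp
  then show ?thesis using off_Suc[OF i] off_len[of ns] by (auto simp: blk_def)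
qed

lemma blk_cover_aux: "m \<le> length ns \<Longrightarrow> x \<in> {1..blk_offset ns m} \<Longrightarrow> \<exists>i<m. x \<in> blk ns i"
proof (induction m)
  case 0 then show ?case by (simp add: blk_offset_def)
next
  case (Suc m)
  show ?case
  proof (cases "x \<le> blk_offset ns m")
    case True
    then have "x \<in> {1..blk_offset ns m}" using Suc.prems by auto
    then obtain i where "i < m" "x \<in> blk ns i" using Suc.IH Suc.prems by auto
    then show ?thesis using less_SucI by blast
  next
    case False
    then have "x \<in> blk ns m" using Suc.prems off_Suc[of m ns] by (auto simp: blk_def)
    then show ?thesis by auto
  qed
qed

lemma blk_cover: "x \<in> {1..sum_list ns} \<Longrightarrow> \<exists>i<length ns. x \<in> blk ns i"
  using blk_cover_aux[of "length ns" ns x] off_len[of ns] by auto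

lemma card_blk: "card (blk ns i) = ns ! i"
  by (simp add: blk_def)

lemma transp_yc: "i < length ns \<Longrightarrow> a \<in> blk ns i \<Longrightarrow> b \<in> blk ns i \<Longrightarrow> transpose a b \<in> young_carrier ns"
proof -
  assume i: "i < length ns" and ab: "a \<in> blk ns i" "b \<in> blk ns i"
  have "transpose a b ` blk ns j = blk ns j" if "j < length ns" for j
  proof (cases "j = i")
    case True then show ?thesis using ab by (intro transpose_image_eq) simp
  next
    case False
    then have "a \<notin> blk ns j" "b \<notin> blk ns j" using blk_disj[OF i that] ab by auto
    then show ?thesis by (intro transpose_image_eq) simp
  qed
  moreover have "transpose a b permutes {1..sum_list ns}"
    using ab blk_sub[OF i] by (intro permutes_swap_id) auto
  ultimately show ?thesis unfolding young_carrier_def by blast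
qed

lemma inj_transp_comm: "inj h \<Longrightarrow> h (transpose x y w) = transpose (h x) (h y) (h w)"
  by (auto simp: transpose_def inj_eq)



lemma gen_by_transp:
  assumes H: "subgroup H (young_group ns)"
  and T: "\<And>i x y. i < length ns \<Longrightarrow> x \<in> blk ns i \<Longrightarrow> y \<in> blk ns i \<Longrightarrow> transpose x y \<in> H"
  shows "young_carrier ns \<subseteq> H"
proof -
  have "\<forall>p. p \<in> young_carrier ns \<longrightarrow> card {x. p x \<noteq> x} = m \<longrightarrow> p \<in> H" for m
  proof (induction m rule: less_induct)
    case (less m)
    show ?case
    proof (intro allI impI)
      fix p assume p: "p \<in> young_carrier ns" and m: "card {x. p x \<noteq> x} = m"
      have supp: "{x. p x \<noteq> x} \<subseteq> {1..sum_list ns}"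
        using yc_permutes[OF p] unfolding permutes_def by blast
      have fin: "finite {x. p x \<noteq> x}" using supp finite_subset by blast
      show "p \<in> H"
      proof (cases "{x. p x \<noteq> x} = {}")
        case True then have "p = id" by auto
        then show ?thesis using subgroup.one_closed[OF H] by simp
      next
        case False
        then obtain x where x: "p x \<noteq> x" by auto
        have "x \<in> {1..sum_list ns}" using supp x by blast
        then obtain i where i: "i < length ns" "x \<in> blk ns i" using blk_cover by blast
        have pxi: "p x \<in> blk ns i" using yc_blk[OF p i] .
        define t where "t = transpose x (p x)"
        have tH: "t \<in> H" using T[OF i pxi] t_def by simp
        have tY: "t \<in> young_carrier ns" using transp_yc[OF i pxi] t_def by simp
        define q where "q = t \<circ> p"
        have qY: "q \<in> young_carrier ns"
          using subgroup.m_closed[OF young_subgroup tY p] unfolding q_def sym_group_mult .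
        have sub: "{y. q y \<noteq> y} \<subseteq> {y. p y \<noteq> y} - {x}"
        proof
          fix y assume "y \<in> {y. q y \<noteq> y}"
          then have qy: "q y \<noteq> y" by simp
          have yx: "y \<noteq> x" using qy by (auto simp: q_def t_def)
          moreover have "p y \<noteq> y"
          proof
            assume py: "p y = y"
            have "y \<noteq> p x" using py x yc_inj[OF p] by (metis injD)
            then have "q y = y" using py yx by (simp add: q_def t_def)
            with qy show False by simp
          qed
          ultimately show "y \<in> {y. p y \<noteq> y} - {x}" by simp
        qed
        have "card {y. q y \<noteq> y} \<le> card ({y. p y \<noteq> y} - {x})"
          using card_mono[OF finite_Diff[OF fin] sub] .
        also have "\<dots> < m" using card_Diff1_less[OF fin, of x] x m by simp
        finally have lt: "card {y. q y \<noteq> y} < m" .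
        have "q \<in> H" using less.IH[OF lt] qY by blast
        have "p = t \<circ> q" unfolding q_def t_def by (rule ext) simp
        then show "p \<in> H" using subgroup.m_closed[OF H tH \<open>q \<in> H\<close>] by simp
      qed
    qed
  qed
  then show ?thesis by blast
qed

lemma blk_transp:
  assumes H: "subgroup H (young_group ns)" and i: "i < length ns"
  and A: "A \<subseteq> blk ns i" "ns ! i < 2 * card A"
  and TA: "\<And>a b. a \<in> A \<Longrightarrow> b \<in> A \<Longrightarrow> transpose a b \<in> H"
  and reach: "\<And>x. x \<in> blk ns i \<Longrightarrow> \<exists>h\<in>H. h x \<in> A"
  and x: "x \<in> blk ns i" and y: "y \<in> blk ns i"
  shows "transpose x y \<in> H"
proof -
  define R where "R u v \<longleftrightarrow> u = v \<or> transpose u v \<in> H" for u v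
  have HY: "H \<subseteq> young_carrier ns" using subgroup.subset[OF H] by simp
  have Rsym: "R u v \<Longrightarrow> R v u" for u v by (auto simp: R_def transpose_commute)
  have Rtrans: "R u v \<Longrightarrow> R v w \<Longrightarrow> R u w" for u v w
  proof -
    assume uv: "R u v" and vw: "R v w"
    show "R u w"
    proof (cases "u = v \<or> v = w \<or> u = w")
      case True then show ?thesis using uv vw by (auto simp: R_def)
    next
      case False
      then have eq: "transpose u v \<circ> transpose v w \<circ> transpose u v = transpose u w"
        using transpose_comp_triple[of u w v] by simp
      have "transpose u v \<in> H" "transpose v w \<in> H" using False uv vw R_def by auto
      then have "transpose u v \<circ> transpose v w \<circ> transpose u v \<in> H"
        using subgroup.m_closed[OF H subgroup.m_closed[OF H]] by simp
      then show ?thesis unfolding R_def eq by simp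
    qed
  qed
  have Rinv: "R (h u) (h v)" if h: "h \<in> H" and uv: "R u v" for h u v
  proof (cases "u = v")
    case True then show ?thesis by (simp add: R_def)
  next
    case False
    then have t: "transpose u v \<in> H" using uv R_def by simp
    have hY: "h \<in> young_carrier ns" using h HY by auto
    let ?h' = "inv\<^bsub>young_group ns\<^esub> h"
    have h'H: "?h' \<in> H" using subgroup.m_inv_closed[OF H h] .
    have "h \<circ> transpose u v \<circ> ?h' = transpose (h u) (h v)"
    proof
      fix z
      have "h (?h' z) = z" using yinv(3)[OF hY] by (metis comp_apply id_apply)
      then show "(h \<circ> transpose u v \<circ> ?h') z = transpose (h u) (h v) z"
        using inj_transp_comm[OF yc_inj[OF hY], of u v "?h' z"] by simp
    qed
    moreover have "h \<circ> transpose u v \<circ> ?h' \<in> H"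
      using subgroup.m_closed[OF H subgroup.m_closed[OF H h t] h'H] by simp
    ultimately show ?thesis by (simp add: R_def)
  qed
  have "A \<noteq> {}"
  proof
    assume "A = {}" then show False using A(2) by simp
  qed
  then obtain a where a: "a \<in> A" by auto
  define C where "C = {v \<in> blk ns i. R a v}"
  have AC: "A \<subseteq> C" using A TA a by (auto simp: C_def R_def)
  have finB: "finite (blk ns i)" by (simp add: blk_def)
  have CB: "C \<subseteq> blk ns i" by (auto simp: C_def)
  have finC: "finite C" using finite_subset[OF CB finB] .
  have Cinv: "R a (h v)" if v: "v \<in> C" and h: "h \<in> H" for v h
  proof -
    have hY: "h \<in> young_carrier ns" using h HY by auto
    have "C \<inter> h ` C \<noteq> {}"
    proof
      assume dis: "C \<inter> h ` C = {}"
      have hCB: "h ` C \<subseteq> blk ns i" using CB yc_blk[OF hY i] by auto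
      have "card (C \<union> h ` C) = card C + card (h ` C)"
        using card_Un_disjoint[OF finC _ dis] finC by simp
      also have "card (h ` C) = card C" using card_image[OF inj_on_subset[OF yc_inj[OF hY] subset_UNIV]] .
      finally have c1: "card (C \<union> h ` C) = 2 * card C" by simp
      have c2: "card (C \<union> h ` C) \<le> ns ! i" using card_mono[OF finB Un_least[OF CB hCB]] card_blk[of ns i] by simp
      have c3: "card A \<le> card C" using card_mono[OF finC AC] .
      show False using c1 c2 c3 A(2) by linarith
    qed
    then obtain w where w: "w \<in> C" "h w \<in> C" by auto
    have "R a (h w)" "R a w" "R a v" using w v C_def by auto
    have "R w v" using Rtrans[OF Rsym[OF \<open>R a w\<close>] \<open>R a v\<close>] .
    then have "R (h w) (h v)" using Rinv[OF h] by blast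
    then show "R a (h v)" using Rtrans[OF \<open>R a (h w)\<close>] by blast
  qed
  have allR: "R a z" if z: "z \<in> blk ns i" for z
  proof -
    obtain h where h: "h \<in> H" "h z \<in> A" using reach[OF z] by blast
    have hY: "h \<in> young_carrier ns" using h HY by auto
    let ?h' = "inv\<^bsub>young_group ns\<^esub> h"
    have h'H: "?h' \<in> H" using subgroup.m_inv_closed[OF H h(1)] .
    have "?h' (h z) = z" using yinv(2)[OF hY] by (metis comp_apply id_apply)
    moreover have "R a (?h' (h z))" using Cinv[of "h z" ?h'] AC h h'H by auto
    ultimately show ?thesis by simp
  qed
  have "R x y" using Rtrans[OF Rsym[OF allR[OF x]] allR[OF y]] .
  then show ?thesis using subgroup.one_closed[OF H] by (auto simp: R_def)
qed



lemma yc_comp: "p \<in> young_carrier ns \<Longrightarrow> q \<in> young_carrier ns \<Longrightarrow> p \<circ> q \<in> young_carrier ns"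
  using subgroup.m_closed[OF young_subgroup] unfolding sym_group_mult by blast

lemma young_sub_sub: "young_sub ns k \<subseteq> young_carrier ns"
  by (auto simp: young_sub_def)

theorem corollary3p9:
  fixes ns :: "nat list" and k :: nat and g :: "nat \<Rightarrow> nat"
  assumes "ns \<noteq> []"
    and "k > 0"
    and "\<forall>i < length ns. ns ! i > 2 * k"
    and "g \<in> carrier (young_group ns)"
    and "\<forall>i < length ns. \<forall>x \<in> blk ns i. card (orbit g x) > k"
  shows "invariably_generate (young_group ns) {0::nat, 1}
           (\<lambda>j. if j = 0 then young_sub ns k else generate (young_group ns) {g})"
proof -
  have grp: "group (young_group ns)" by (rule young_group_is_group)
  have gY: "g \<in> young_carrier ns" using assms(4) by simp
  show ?thesis unfolding invariably_generate_def
  proof (intro allI impI)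
    fix \<sigma> :: "nat \<Rightarrow> nat \<Rightarrow> nat"
    assume \<sigma>: "\<forall>i\<in>{0::nat,1}. \<sigma> i \<in> carrier (young_group ns)"
    define s0 where "s0 = \<sigma> 0"
    define s1 where "s1 = \<sigma> 1"
    have s0Y: "s0 \<in> young_carrier ns" and s1Y: "s1 \<in> young_carrier ns"
      using \<sigma> by (auto simp: s0_def s1_def)
    define t0 where "t0 = inv\<^bsub>young_group ns\<^esub> s0"
    define t1 where "t1 = inv\<^bsub>young_group ns\<^esub> s1"
    have t0Y: "t0 \<in> young_carrier ns" and t1Y: "t1 \<in> young_carrier ns"
      using yinv(1)[OF s0Y] yinv(1)[OF s1Y] by (auto simp: t0_def t1_def)
    have t0s0: "t0 (s0 z) = z" for z using yinv(2)[OF s0Y] unfolding t0_def by (metis comp_apply id_apply)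
    have t1s1: "t1 (s1 z) = z" for z using yinv(2)[OF s1Y] unfolding t1_def by (metis comp_apply id_apply)
    have s1t1: "s1 (t1 z) = z" for z using yinv(3)[OF s1Y] unfolding t1_def by (metis comp_apply id_apply)
    define S where "S = (\<Union>i\<in>{0::nat,1}. (\<lambda>h. inv\<^bsub>young_group ns\<^esub> (\<sigma> i) \<otimes>\<^bsub>young_group ns\<^esub> h \<otimes>\<^bsub>young_group ns\<^esub> \<sigma> i) `
        (if i = 0 then young_sub ns k else generate (young_group ns) {g}))"
    have S0: "(\<lambda>h. t0 \<circ> h \<circ> s0) ` young_sub ns k \<subseteq> S"
      unfolding S_def t0_def s0_def by force
    have S1: "(\<lambda>h. t1 \<circ> h \<circ> s1) ` generate (young_group ns) {g} \<subseteq> S"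
      unfolding S_def t1_def s1_def by force
    have genY: "generate (young_group ns) {g} \<subseteq> young_carrier ns"
      using group.generate_incl[OF grp, of "{g}"] gY by simp
    have SY: "S \<subseteq> young_carrier ns"
    proof -
      have "(\<lambda>h. t0 \<circ> h \<circ> s0) ` young_sub ns k \<subseteq> young_carrier ns"
        using young_sub_sub t0Y s0Y yc_comp by blast
      moreover have "(\<lambda>h. t1 \<circ> h \<circ> s1) ` generate (young_group ns) {g} \<subseteq> young_carrier ns"
        using genY t1Y s1Y yc_comp by blast
      moreover have "S = (\<lambda>h. t0 \<circ> h \<circ> s0) ` young_sub ns k \<union> (\<lambda>h. t1 \<circ> h \<circ> s1) ` generate (young_group ns) {g}"
        unfolding S_def t0_def s0_def t1_def s1_def by auto
      ultimately show ?thesis by simp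
    qed
    define H where "H = generate (young_group ns) S"
    have H: "subgroup H (young_group ns)"
      unfolding H_def by (rule group.generate_is_subgroup[OF grp]) (simp add: SY)
    have SH: "S \<subseteq> H" unfolding H_def using generate.incl[of _ S] by (intro subsetI)
    have "young_carrier ns \<subseteq> H"
    proof (rule gen_by_transp[OF H])
      fix i x y assume i: "i < length ns" and x: "x \<in> blk ns i" and y: "y \<in> blk ns i"
      define L where "L j = {blk_offset ns j + ns ! j - k + 1 .. blk_offset ns j + ns ! j}" for j
      have Lblk: "L j \<subseteq> blk ns j" if "j < length ns" for j
        using assms(3) that by (auto simp: L_def blk_def)
      have cardL: "card (L j) = k" if "j < length ns" for j
        using assms(3) that by (auto simp: L_def)
      define A where "A = {a \<in> blk ns i. s0 a \<notin> L i}"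
      have finB: "finite (blk ns i)" by (simp add: blk_def)
      have AB: "A \<subseteq> blk ns i" by (auto simp: A_def)
      have BA: "blk ns i - A \<subseteq> t0 ` L i"
      proof
        fix a assume "a \<in> blk ns i - A"
        then have "s0 a \<in> L i" by (auto simp: A_def)
        then show "a \<in> t0 ` L i" using t0s0[of a] by (metis image_eqI)
      qed
      have cBA: "card (blk ns i - A) \<le> k"
      proof -
        have "card (blk ns i - A) \<le> card (t0 ` L i)"
          using BA by (intro card_mono) (auto simp: L_def)
        also have "\<dots> \<le> card (L i)" by (rule card_image_le) (simp add: L_def)
        finally show ?thesis using cardL[OF i] by simp
      qed
      have cA: "ns ! i < 2 * card A"
      proof -
        have "card (blk ns i - A) = card (blk ns i) - card A"
          using card_Diff_subset[OF finite_subset[OF AB finB] AB] .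
        moreover have "card A \<le> card (blk ns i)" using card_mono[OF finB AB] .
        ultimately show ?thesis using cBA card_blk[of ns i] assms(3) i by auto
      qed
      show "transpose x y \<in> H"
      proof (rule blk_transp[OF H i AB cA _ _ x y])
        fix a b assume a: "a \<in> A" and b: "b \<in> A"
        have a0: "s0 a \<in> blk ns i" "s0 a \<notin> L i" using a yc_blk[OF s0Y i] by (auto simp: A_def)
        have b0: "s0 b \<in> blk ns i" "s0 b \<notin> L i" using b yc_blk[OF s0Y i] by (auto simp: A_def)
        have notL: "z \<noteq> s0 a \<and> z \<noteq> s0 b" if j: "j < length ns" and z: "z \<in> L j" for j z
        proof (cases "j = i")
          case True then show ?thesis using z a0 b0 by auto
        next
          case False
          then have "z \<in> blk ns j" "blk ns i \<inter> blk ns j = {}" using Lblk[OF j] z blk_disj[OF i j] by auto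
          then show ?thesis using a0 b0 by auto
        qed
        have tr: "transpose (s0 a) (s0 b) \<in> young_sub ns k"
          unfolding young_sub_def using transp_yc[OF i a0(1) b0(1)] notL unfolding L_def by auto
        have eq: "t0 \<circ> transpose (s0 a) (s0 b) \<circ> s0 = transpose a b"
        proof
          fix z
          show "(t0 \<circ> transpose (s0 a) (s0 b) \<circ> s0) z = transpose a b z"
            using inj_transp_comm[OF yc_inj[OF s0Y], of a b z] t0s0[of "transpose a b z"] by simp
        qed
        have "transpose a b \<in> S" using S0 tr eq by force
        then show "transpose a b \<in> H" using SH by blast
      next
        fix z assume z: "z \<in> blk ns i"
        define g' where "g' = t1 \<circ> g \<circ> s1"
        have "g \<in> generate (young_group ns) {g}" by (simp add: generate.incl)
        then have "g' \<in> S" using S1 unfolding g'_def by blast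
        then have g'H: "g' \<in> H" using SH by blast
        have powH: "g' ^^ n \<in> H" for n
        proof (induction n)
          case 0 show ?case using subgroup.one_closed[OF H] unfolding funpow.simps(1) yg_simps(3) .
        next
          case (Suc n) show ?case using subgroup.m_closed[OF H g'H Suc] unfolding funpow.simps(2) yg_simps(2) .
        qed
        have powEq: "g' ^^ n = t1 \<circ> g ^^ n \<circ> s1" for n
        proof (induction n)
          case 0 then show ?case by (simp add: fun_eq_iff t1s1)
        next
          case (Suc n) then show ?case by (simp add: fun_eq_iff g'_def s1t1)
        qed
        show "\<exists>h\<in>H. h z \<in> A"
        proof (rule ccontr)
          assume "\<not> (\<exists>h\<in>H. h z \<in> A)"
          then have nA: "(g' ^^ n) z \<notin> A" for n using powH by blast
          have HY: "H \<subseteq> young_carrier ns" using subgroup.subset[OF H] by simp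
          have "orbit g' z \<subseteq> blk ns i - A"
          proof
            fix w assume "w \<in> orbit g' z"
            then obtain n where n: "w = (g' ^^ n) z" unfolding orbit_altdef by blast
            have "(g' ^^ n) z \<in> blk ns i" using yc_blk[OF _ i z] powH HY by blast
            then show "w \<in> blk ns i - A" using n nA by blast
          qed
          then have c1: "card (orbit g' z) \<le> k"
            using card_mono[OF finite_Diff[OF finB]] cBA le_trans by blast
          have oeq: "orbit g' z = t1 ` orbit g (s1 z)"
            unfolding orbit_altdef powEq by auto
          have "card (orbit g' z) = card (orbit g (s1 z))"
            unfolding oeq using card_image[OF inj_on_subset[OF yc_inj[OF t1Y] subset_UNIV]] .
          moreover have "s1 z \<in> blk ns i" using yc_blk[OF s1Y i z] .
          ultimately have "card (orbit g' z) > k" using assms(5) i by simp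
          then show False using c1 by simp
        qed
      qed
    qed
    then have "H = young_carrier ns" using subgroup.subset[OF H] by auto
    then show "generate (young_group ns) (\<Union>i\<in>{0::nat,1}. (\<lambda>h. inv\<^bsub>young_group ns\<^esub> (\<sigma> i) \<otimes>\<^bsub>young_group ns\<^esub> h \<otimes>\<^bsub>young_group ns\<^esub> \<sigma> i) `
        (if i = 0 then young_sub ns k else generate (young_group ns) {g})) = carrier (young_group ns)"
      unfolding H_def S_def by simp
  qed
qed

end
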